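(* An admissible configuration exists for any affine positive normal monoid $M$ with $\operatorname{rank}(M)\ge2$ and any extremal generator $m\in M$.
   Context: Monoids are commutative, cancellative, with unit. An affine monoid is a finitely generated monoid whose group of differences $\operatorname{gp}(M)$ is torsion free; it is positive if it has no nontrivial units; it is normal if $x\in\operatorname{gp}(M)$ and $nx\in M$ for some $n\in\mathbb N$ imply $x\in M$. Let $M$ be an affine positive normal monoid of rank $r$, with $\operatorname{gp}(M)$ identified with $\mathbb Z^r$. For a rational affine hyperplane $\mathcal H\subset\mathbb R^r\setminus\{0\}$ with $\mathbb R_+M=\mathbb R_+\big((\mathbb R_+M)\cap\mathcal H\big)$, put $\Phi(L)=(\mathbb R_+L)\cap\mathcal H$ for a submonoid $L\subset M$, $\Phi(x)=(\mathbb R_+x)\cap\mathcal H$ for a nonzero $x\in M$, and, for a convex set $P\subset\mathcal H$, $M(P)=\{z\in\mathbb Z^r\setminus\{0\}\mid(\mathbb R_+z)\cap\mathcal H\in P\}\cup\{0\}$. An element $m\in M$ is an extremal generator if $\Phi(m)$ is a vertex of $\Phi(M)$ and $m$ generates $(\mathbb R_+m)\cap M\cong\mathbb Z_+$. For polytopes $P\subset Q$ sharing a vertex $v$, $Q$ is tangent to $P$ at $v$ if $\dim P=\dim Q$ and the corner cones spanned by $P$ and $Q$ at $v$ coincide. A pyramid with apex $v$ and base $P$ is $\operatorname{conv}(v,P)$ with $v\notin\operatorname{Aff}(P)$. For an extremal generator $m\in M$, a triple $(\mathcal H,\Delta_1,\Delta_2)$ is an admissible configuration if $\mathcal H\subset\mathbb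 R^r\setminus\{0\}$ is a rational affine hyperplane with $\mathbb R_+M=\mathbb R_+\big((\mathbb R_+M)\cap\mathcal H\big)$, and $\Delta_1,\Delta_2\subset\mathcal H$ are rational pyramids with apex $\Phi(m)$ such that: (a) $\Phi(M)\subset\Delta_1\subset\Delta_2$; (b) $\Delta_1$ and $\Delta_2$ are tangent to $\Phi(M)$ at $\Phi(m)$; (c) $M(\Delta_1)=\mathbb Z_+m+M(F_1)$, where $F_1\subset\Delta_1$ is the facet opposite to $\Phi(m)$; (d) $M(\Delta_2)=\mathbb Z_+m+M(F_2)$, where $F_2\subset\Delta_2$ is the facet opposite to $\Phi(m)$; (e) $F_2\cap\Phi(M)=\emptyset$. *)

theory Defs
  imports "HOL-Analysis.Analysis"
begin

text \<open>We work in \<open>\<real>^r\<close> with \<open>r = CARD('n)\<close>; the group \<open>\<int>^r\<close> is the set of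
  integral points.\<close>

definition lattice_pts :: "(real^'n) set" where
  "lattice_pts = {x. \<forall>i. x $ i \<in> \<int>}"

definition rat_vec :: "real^'n \<Rightarrow> bool" where
  "rat_vec x \<longleftrightarrow> (\<forall>i. x $ i \<in> \<rat>)"

definition affine_monoid :: "(real^'n) set \<Rightarrow> bool" where
  "affine_monoid M \<longleftrightarrow> 0 \<in> M \<and> M \<subseteq> lattice_pts \<and> (\<forall>x\<in>M. \<forall>y\<in>M. x + y \<in> M) \<and>
     (\<exists>G. finite G \<and> G \<subseteq> M \<and> M = {(\<Sum>g\<in>G. of_nat (k g) *\<^sub>R g) | k :: real^'n \<Rightarrow> nat. True})"

definition gp :: "(real^'n) set \<Rightarrow> (real^'n) set" where
  "gp M = {x - y | x y. x \<in> M \<and> y \<in> M}"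

definition positive_monoid :: "(real^'n) set \<Rightarrow> bool" where
  "positive_monoid M \<longleftrightarrow> (\<forall>x\<in>M. - x \<in> M \<longrightarrow> x = 0)"

definition normal_monoid :: "(real^'n) set \<Rightarrow> bool" where
  "normal_monoid M \<longleftrightarrow> (\<forall>x\<in>gp M. \<forall>n::nat. n \<ge> 1 \<and> of_nat n *\<^sub>R x \<in> M \<longrightarrow> x \<in> M)"

definition ray :: "real^'n \<Rightarrow> (real^'n) set" where
  "ray x = {c *\<^sub>R x | c. c \<ge> 0}"

definition rcone :: "(real^'n) set \<Rightarrow> (real^'n) set" where
  "rcone L = convex_cone hull L"

definition rat_hyperplane :: "(real^'n) set \<Rightarrow> bool" where
  "rat_hyperplane H \<longleftrightarrow> (\<exists>a c. rat_vec a \<and> a \<noteq> 0 \<and> c \<in> \<rat> \<and> H = {x. a \<bullet> x = c})"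

definition good_hyperplane :: "(real^'n) set \<Rightarrow> (real^'n) set \<Rightarrow> bool" where
  "good_hyperplane M H \<longleftrightarrow> rat_hyperplane H \<and> 0 \<notin> H \<and> rcone M = rcone (rcone M \<inter> H)"

definition PhiS :: "(real^'n) set \<Rightarrow> (real^'n) set \<Rightarrow> (real^'n) set" where
  "PhiS H L = rcone L \<inter> H"

definition PhiV :: "(real^'n) set \<Rightarrow> real^'n \<Rightarrow> (real^'n) set" where
  "PhiV H x = ray x \<inter> H"

text \<open>\<open>M(P)\<close>: \<open>(\<real>_+ z) \<inter> H \<in> P\<close> is read as: this intersection is a single point lying in P.\<close>
definition MP :: "(real^'n) set \<Rightarrow> (real^'n) set \<Rightarrow> (real^'n) set" where
  "MP H P = {z \<in> lattice_pts. z \<noteq> 0 \<and> (\<exists>p\<in>P. PhiV H z = {p})} \<union> {0}"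

definition extremal_generator :: "(real^'n) set \<Rightarrow> (real^'n) set \<Rightarrow> real^'n \<Rightarrow> bool" where
  "extremal_generator M H m \<longleftrightarrow> m \<in> M \<and>
     (\<exists>v. PhiV H m = {v} \<and> v extreme_point_of PhiS H M) \<and>
     ray m \<inter> M = range (\<lambda>k::nat. of_nat k *\<^sub>R m)"

definition corner_cone :: "(real^'n) set \<Rightarrow> real^'n \<Rightarrow> (real^'n) set" where
  "corner_cone P v = {c *\<^sub>R (x - v) | c x. 0 \<le> c \<and> x \<in> P}"

definition tangent_at :: "(real^'n) set \<Rightarrow> (real^'n) set \<Rightarrow> real^'n \<Rightarrow> bool" where
  "tangent_at Q P v \<longleftrightarrow> P \<subseteq> Q \<and> v extreme_point_of P \<and> v extreme_point_of Q \<and>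
     aff_dim P = aff_dim Q \<and> corner_cone P v = corner_cone Q v"

definition rational_polytope :: "(real^'n) set \<Rightarrow> bool" where
  "rational_polytope P \<longleftrightarrow> (\<exists>V. finite V \<and> (\<forall>x\<in>V. rat_vec x) \<and> P = convex hull V)"

definition rat_pyramid :: "(real^'n) set \<Rightarrow> real^'n \<Rightarrow> (real^'n) set \<Rightarrow> (real^'n) set \<Rightarrow> bool" where
  "rat_pyramid H v F D \<longleftrightarrow> rat_vec v \<and> rational_polytope F \<and> v \<notin> affine hull F \<and>
     D = convex hull (insert v F) \<and> D \<subseteq> H"

definition admissible_config ::
  "(real^'n) set \<Rightarrow> real^'n \<Rightarrow> (real^'n) set \<Rightarrow> (real^'n) set \<Rightarrow> (real^'n) set \<Rightarrow> bool" where
  "admissible_config M m H D1 D2 \<longleftrightarrow> good_hyperplane M H \<and>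
     (\<exists>v F1 F2. PhiV H m = {v} \<and> rat_pyramid H v F1 D1 \<and> rat_pyramid H v F2 D2 \<and>
        PhiS H M \<subseteq> D1 \<and> D1 \<subseteq> D2 \<and>
        tangent_at D1 (PhiS H M) v \<and> tangent_at D2 (PhiS H M) v \<and>
        MP H D1 = {of_nat k *\<^sub>R m + y | k y. y \<in> MP H F1} \<and>
        MP H D2 = {of_nat k *\<^sub>R m + y | k y. y \<in> MP H F2} \<and>
        F2 \<inter> PhiS H M = {})"

end

theory Submission
  imports Defs
begin



lemma lat_inner: "x \<in> lattice_pts \<Longrightarrow> y \<in> lattice_pts \<Longrightarrow> x \<bullet> y \<in> \<int>"
  unfolding lattice_pts_def inner_vec_def by (auto intro!: Ints_sum Ints_mult)

lemma lat_add: "x \<in> lattice_pts \<Longrightarrow> y \<in> lattice_pts \<Longrightarrow> x + y \<in> lattice_pts"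
  unfolding lattice_pts_def by auto

lemma lat_diff: "x \<in> lattice_pts \<Longrightarrow> y \<in> lattice_pts \<Longrightarrow> x - y \<in> lattice_pts"
  unfolding lattice_pts_def by auto

lemma lat_scale: "x \<in> lattice_pts \<Longrightarrow> c \<in> \<int> \<Longrightarrow> c *\<^sub>R x \<in> lattice_pts"
  unfolding lattice_pts_def by auto

lemma lat_rat: "x \<in> lattice_pts \<Longrightarrow> rat_vec x"
  unfolding lattice_pts_def rat_vec_def using Ints_subset_Rats by blast

lemma ray_H:
  fixes h z :: "real^'n"
  shows "PhiV {x. h \<bullet> x = 1} z = (if h \<bullet> z > 0 then {(1 / (h \<bullet> z)) *\<^sub>R z} else {})"
proof (cases "h \<bullet> z > 0")
  case True
  show ?thesis using True
    unfolding PhiV_def ray_def by (auto simp: field_simps)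
next
  case False
  { fix c :: real assume "c \<ge> 0" "h \<bullet> (c *\<^sub>R z) = 1"
    then have "c * (h \<bullet> z) = 1" by simp
    moreover have "c * (h \<bullet> z) \<le> 0" using False \<open>c\<ge>0\<close> by (simp add: mult_nonneg_nonpos)
    ultimately have False by simp }
  then show ?thesis using False unfolding PhiV_def ray_def by auto
qed

lemma MP_H:
  fixes h :: "real^'n"
  shows "MP {x. h \<bullet> x = 1} P = {z \<in> lattice_pts. z \<noteq> 0 \<and> h \<bullet> z > 0 \<and> (1 / (h \<bullet> z)) *\<^sub>R z \<in> P} \<union> {0}"
  unfolding MP_def ray_H by auto




locale cfg =
  fixes M G :: "(real^'n) set" and m lam mu :: "real^'n"
  assumes finG: "finite G" and GM: "G \<subseteq> M" and Mlat: "M \<subseteq> lattice_pts" and mM: "m \<in> M"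
  and Mrep: "\<And>x. x \<in> M \<Longrightarrow> \<exists>c. (\<forall>g\<in>G. c g \<ge> 0) \<and> x = (\<Sum>g\<in>G. c g *\<^sub>R g)"
  and lamZ: "lam \<in> lattice_pts" and muZ: "mu \<in> lattice_pts"
  and lm: "lam \<bullet> m = 1" and mm: "mu \<bullet> m = 0"
  and lpos: "\<And>g. g \<in> G \<Longrightarrow> g \<noteq> 0 \<Longrightarrow> lam \<bullet> g > 0"
  and dich: "\<And>g. g \<in> G \<Longrightarrow> mu \<bullet> g > 0 \<or> g = (lam \<bullet> g) *\<^sub>R m"
begin

definition "h = lam + mu"
definition "H = {x. h \<bullet> x = 1}"
definition "Gp = {g\<in>G. mu \<bullet> g > 0}"
definition "wv g = (1 / (mu \<bullet> g)) *\<^sub>R (g - (lam \<bullet> g) *\<^sub>R m)"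
definition "V = wv ` Gp"
definition "F = convex hull V"
definition "D = convex hull (insert m V)"

lemma hm: "h \<bullet> m = 1" unfolding h_def using lm mm by (simp add: inner_add_left)

lemma mu_nonneg: "g \<in> G \<Longrightarrow> mu \<bullet> g \<ge> 0"
  using dich[of g] mm by (metis inner_scaleR_right mult_zero_right order.refl less_imp_le)

lemma lam_nonneg: "g \<in> G \<Longrightarrow> lam \<bullet> g \<ge> 0"
  using lpos[of g] by (cases "g = 0") auto

definition "Cg = {x. \<exists>c. (\<forall>g\<in>G. c g \<ge> 0) \<and> x = (\<Sum>g\<in>G. c g *\<^sub>R g)}"

lemma Cg_cone: "convex_cone Cg"
  unfolding convex_cone_iff
proof (intro conjI ballI allI impI)
  show "0 \<in> Cg" unfolding Cg_def by (rule CollectI, rule exI[of _ "\<lambda>_. 0"]) simp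
next
  fix x y assume "x \<in> Cg" "y \<in> Cg"
  then obtain c d where c: "\<forall>g\<in>G. c g \<ge> 0" "x = (\<Sum>g\<in>G. c g *\<^sub>R g)"
    and d: "\<forall>g\<in>G. d g \<ge> 0" "y = (\<Sum>g\<in>G. d g *\<^sub>R g)" unfolding Cg_def by blast
  show "x + y \<in> Cg" unfolding Cg_def
    by (rule CollectI, rule exI[of _ "\<lambda>g. c g + d g"])
       (use c d in \<open>auto simp: scaleR_add_left sum.distrib\<close>)
next
  fix x and a :: real assume "x \<in> Cg" "a \<ge> 0"
  then obtain c where c: "\<forall>g\<in>G. c g \<ge> 0" "x = (\<Sum>g\<in>G. c g *\<^sub>R g)" unfolding Cg_def by blast
  show "a *\<^sub>R x \<in> Cg" unfolding Cg_def
    by (rule CollectI, rule exI[of _ "\<lambda>g. a * c g"])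
       (use c \<open>a\<ge>0\<close> in \<open>auto simp: scaleR_sum_right\<close>)
qed

lemma rcone_Cg: "rcone M \<subseteq> Cg"
  unfolding rcone_def
  by (rule hull_minimal) (use Mrep Cg_cone in \<open>auto simp: Cg_def\<close>)

lemma Cg_props:
  assumes "x \<in> Cg"
  shows "lam \<bullet> x \<ge> 0" "mu \<bullet> x \<ge> 0" "lam \<bullet> x = 0 \<Longrightarrow> x = 0"
proof -
  obtain c where c: "\<forall>g\<in>G. c g \<ge> 0" "x = (\<Sum>g\<in>G. c g *\<^sub>R g)" using assms unfolding Cg_def by blast
  have l: "lam \<bullet> x = (\<Sum>g\<in>G. c g * (lam \<bullet> g))" using c by (simp add: inner_sum_right)
  have u: "mu \<bullet> x = (\<Sum>g\<in>G. c g * (mu \<bullet> g))" using c by (simp add: inner_sum_right)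
  show "lam \<bullet> x \<ge> 0" unfolding l using c lam_nonneg by (auto intro!: sum_nonneg)
  show "mu \<bullet> x \<ge> 0" unfolding u using c mu_nonneg by (auto intro!: sum_nonneg)
  assume "lam \<bullet> x = 0"
  then have "\<forall>g\<in>G. c g * (lam \<bullet> g) = 0"
    using l c lam_nonneg finG by (subst sum_nonneg_eq_0_iff[symmetric]) auto
  then have "\<forall>g\<in>G. c g *\<^sub>R g = 0" using lpos by (metis less_irrefl mult_eq_0_iff scale_eq_0_iff)
  then show "x = 0" using c by (metis (no_types, lifting) sum.neutral)
qed

lemma rcone_h_pos: "x \<in> rcone M \<Longrightarrow> x \<noteq> 0 \<Longrightarrow> h \<bullet> x > 0"
  using Cg_props[of x] rcone_Cg unfolding h_def
  by (fastforce simp: inner_add_left)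

lemma Gp_h: "g \<in> Gp \<Longrightarrow> h \<bullet> g > 0"
  unfolding Gp_def h_def using lam_nonneg by (fastforce simp: inner_add_left add_nonneg_pos)

lemma wv_props:
  assumes "g \<in> Gp"
  shows "h \<bullet> wv g = 1" "lam \<bullet> wv g = 0"
proof -
  have mu: "mu \<bullet> g > 0" using assms unfolding Gp_def by auto
  show "lam \<bullet> wv g = 0" unfolding wv_def using lm by (simp add: inner_diff_right)
  have "h \<bullet> (g - (lam \<bullet> g) *\<^sub>R m) = mu \<bullet> g"
    unfolding h_def using lm mm by (simp add: inner_diff_right inner_add_left algebra_simps)
  then show "h \<bullet> wv g = 1" unfolding wv_def using mu by simp
qed

lemma V_H: "V \<subseteq> H" and V_lam: "\<And>x. x \<in> V \<Longrightarrow> lam \<bullet> x = 0"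
  unfolding V_def H_def using wv_props by auto

lemma finV: "finite V" unfolding V_def Gp_def using finG by auto

lemma H_convex: "convex H" unfolding H_def by (rule convex_hyperplane)

lemma D_H: "D \<subseteq> H"
  unfolding D_def by (rule hull_minimal) (use V_H hm H_convex in \<open>auto simp: H_def\<close>)

lemma F_sub: "F \<subseteq> H \<inter> {x. lam \<bullet> x = 0}"
  unfolding F_def by (rule hull_minimal)
     (use V_H V_lam H_convex in \<open>auto intro!: convex_Int convex_hyperplane\<close>)

lemma D_repr:
  assumes "x \<in> D"
  shows "\<exists>u f. 0 \<le> u \<and> u \<le> 1 \<and> f \<in> F \<and> x = (1 - u) *\<^sub>R m + u *\<^sub>R f \<or> x = m"
proof (cases "V = {}")
  case True
  then show ?thesis using assms unfolding D_def by simp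
next
  case False
  then show ?thesis using assms unfolding D_def F_def convex_hull_insert[OF False]
    by (smt (verit, ccfv_SIG) mem_Collect_eq)
qed

end



context cfg begin

lemma g_decomp: "g \<in> G \<Longrightarrow> g = (lam \<bullet> g) *\<^sub>R m + (if g \<in> Gp then (mu \<bullet> g) *\<^sub>R wv g else 0)"
  using dich[of g] unfolding Gp_def wv_def by auto

lemma convex_D: "convex D" unfolding D_def by simp

lemma m_D: "m \<in> D" unfolding D_def by (simp add: hull_inc)

lemma F_D: "F \<subseteq> D" unfolding D_def F_def by (rule hull_mono) auto

lemma PhiS_D: "PhiS H M \<subseteq> D"
proof
  fix x assume "x \<in> PhiS H M"
  then have xr: "x \<in> rcone M" and hx: "h \<bullet> x = 1" unfolding PhiS_def H_def by auto
  then have "x \<in> Cg" using rcone_Cg by auto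
  then obtain c where c: "\<forall>g\<in>G. c g \<ge> 0" "x = (\<Sum>g\<in>G. c g *\<^sub>R g)" unfolding Cg_def by blast
  define A where "A = (\<Sum>g\<in>G. c g * (lam \<bullet> g))"
  define B where "B = (\<Sum>g\<in>Gp. c g * (mu \<bullet> g))"
  have GpG: "Gp \<subseteq> G" unfolding Gp_def by auto
  have "x = (\<Sum>g\<in>G. c g *\<^sub>R ((lam \<bullet> g) *\<^sub>R m + (if g \<in> Gp then (mu \<bullet> g) *\<^sub>R wv g else 0)))"
    using c(2) g_decomp by (metis (no_types, lifting) sum.cong)
  also have "\<dots> = A *\<^sub>R m + (\<Sum>g\<in>G. (if g \<in> Gp then (c g * (mu \<bullet> g)) *\<^sub>R wv g else 0))"
  proof -
    have "\<And>g. c g *\<^sub>R ((lam \<bullet> g) *\<^sub>R m + (if g \<in> Gp then (mu \<bullet> g) *\<^sub>R wv g else 0))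
       = (c g * (lam \<bullet> g)) *\<^sub>R m + (if g \<in> Gp then (c g * (mu \<bullet> g)) *\<^sub>R wv g else 0)"
      by (simp add: scaleR_add_right)
    then show ?thesis unfolding A_def by (simp add: sum.distrib scaleR_sum_left)
  qed
  also have "(\<Sum>g\<in>G. (if g \<in> Gp then (c g * (mu \<bullet> g)) *\<^sub>R wv g else 0)) = (\<Sum>g\<in>Gp. (c g * (mu \<bullet> g)) *\<^sub>R wv g)"
    using GpG finG by (simp add: sum.If_cases Int_absorb1)
  finally have xe: "x = A *\<^sub>R m + (\<Sum>g\<in>Gp. (c g * (mu \<bullet> g)) *\<^sub>R wv g)" .
  have finGp: "finite Gp" using finG GpG finite_subset by blast
  have A0: "A \<ge> 0" unfolding A_def using c lam_nonneg by (auto intro!: sum_nonneg)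
  have Bn: "\<And>g. g \<in> Gp \<Longrightarrow> c g * (mu \<bullet> g) \<ge> 0" using c GpG mu_nonneg by auto
  have B0: "B \<ge> 0" unfolding B_def using Bn by (auto intro!: sum_nonneg)
  have "h \<bullet> x = A + B" unfolding xe B_def using hm wv_props
    by (simp add: inner_add_right inner_sum_right)
  then have AB: "A + B = 1" using hx by simp
  show "x \<in> D"
  proof (cases "B = 0")
    case True
    then have "\<forall>g\<in>Gp. c g * (mu \<bullet> g) = 0" using Bn finGp unfolding B_def
      by (subst sum_nonneg_eq_0_iff[symmetric]) auto
    then have "(\<Sum>g\<in>Gp. (c g * (mu \<bullet> g)) *\<^sub>R wv g) = 0" by (intro sum.neutral) simp
    then have "x = m" using xe AB True by simp
    then show ?thesis using m_D by simp
  next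
    case False
    then have Bp: "B > 0" using B0 by simp
    define y where "y = (\<Sum>g\<in>Gp. ((c g * (mu \<bullet> g)) / B) *\<^sub>R wv g)"
    have "y \<in> convex hull V"
      unfolding y_def
    proof (rule convex_sum[OF finGp])
      show "convex (convex hull V)" by simp
      show "(\<Sum>g\<in>Gp. c g * (mu \<bullet> g) / B) = 1" using Bp unfolding B_def by (simp add: sum_divide_distrib[symmetric])
      show "\<And>i. i \<in> Gp \<Longrightarrow> 0 \<le> c i * (mu \<bullet> i) / B" using Bn Bp by simp
      show "\<And>i. i \<in> Gp \<Longrightarrow> wv i \<in> convex hull V" unfolding V_def by (simp add: hull_inc)
    qed
    then have yD: "y \<in> D" using F_D F_def by auto
    have "x = A *\<^sub>R m + B *\<^sub>R y" unfolding xe y_def using Bp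
      by (simp add: scaleR_sum_right)
    then show ?thesis using convexD[OF convex_D m_D yD A0 B0 AB] by simp
  qed
qed

end



lemma corner_cone_iff: "z \<in> corner_cone P v \<longleftrightarrow> (\<exists>c x. 0 \<le> c \<and> x \<in> P \<and> z = c *\<^sub>R (x - v))"
  unfolding corner_cone_def by blast

lemma corner_coneE:
  assumes "z \<in> corner_cone P v"
  obtains c x where "0 \<le> c" "x \<in> P" "z = c *\<^sub>R (x - v)"
  using assms unfolding corner_cone_iff by (elim exE conjE) (rule that; assumption)

lemma corner_coneI: "0 \<le> c \<Longrightarrow> x \<in> P \<Longrightarrow> c *\<^sub>R (x - v) \<in> corner_cone P v"
  unfolding corner_cone_def by blast

lemma corner_cone_aff_dim:
  fixes P :: "(real^'n) set"
  assumes "v \<in> P"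
  shows "aff_dim P = int (dim (corner_cone P v))"
proof -
  have "aff_dim P = int (dim ((+) (- v) ` P))" by (rule aff_dim_eq_dim) (use assms in \<open>simp add: hull_inc\<close>)
  moreover have "dim ((+) (- v) ` P) = dim (corner_cone P v)"
  proof (rule antisym)
    have "(+) (- v) ` P \<subseteq> corner_cone P v" unfolding corner_cone_def
      by (force intro: exI[of _ 1])
    then show "dim ((+) (- v) ` P) \<le> dim (corner_cone P v)" by (rule dim_subset)
    have "corner_cone P v \<subseteq> span ((+) (- v) ` P)" unfolding corner_cone_def
    proof safe
      fix c x assume "x \<in> P"
      then have "x - v \<in> span ((+) (- v) ` P)" by (intro span_base) force
      then show "c *\<^sub>R (x - v) \<in> span ((+) (- v) ` P)" by (rule span_mul)
    qed
    then show "dim (corner_cone P v) \<le> dim ((+) (- v) ` P)" using dim_subset dim_span by metis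
  qed
  ultimately show ?thesis by simp
qed

lemma corner_cone_convex:
  fixes P :: "(real^'n) set"
  assumes "convex P" "v \<in> P"
  shows "convex (corner_cone P v)" "\<And>x c. x \<in> corner_cone P v \<Longrightarrow> c \<ge> 0 \<Longrightarrow> c *\<^sub>R x \<in> corner_cone P v"
    "0 \<in> corner_cone P v"
proof -
  show "0 \<in> corner_cone P v" unfolding corner_cone_iff using assms(2) by (intro exI[of _ 0] exI[of _ v]) auto
  show sc: "\<And>x c. x \<in> corner_cone P v \<Longrightarrow> c \<ge> 0 \<Longrightarrow> c *\<^sub>R x \<in> corner_cone P v"
  proof -
    fix x c assume "x \<in> corner_cone P v" "(c::real) \<ge> 0"
    then obtain c1 x1 where "c1 \<ge> 0" "x1 \<in> P" "x = c1 *\<^sub>R (x1 - v)" by (auto elim: corner_coneE)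
    then show "c *\<^sub>R x \<in> corner_cone P v" unfolding corner_cone_iff using \<open>c \<ge> 0\<close>
      by (intro exI[of _ "c * c1"] exI[of _ x1]) auto
  qed
  have add: "x + y \<in> corner_cone P v" if xc: "x \<in> corner_cone P v" and yc: "y \<in> corner_cone P v" for x y
  proof -
    obtain c1 x1 where 1: "c1 \<ge> 0" "x1 \<in> P" "x = c1 *\<^sub>R (x1 - v)"
      by (rule corner_coneE[OF xc])
    obtain c2 x2 where 2: "c2 \<ge> 0" "x2 \<in> P" "y = c2 *\<^sub>R (x2 - v)"
      by (rule corner_coneE[OF yc])
    show ?thesis
    proof (cases "c1 + c2 = 0")
      case True
      then have "c1 = 0" "c2 = 0" using 1 2 by auto
      then show ?thesis using 1 2 \<open>0 \<in> corner_cone P v\<close> by simp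
    next
      case False
      then have s: "c1 + c2 > 0" using 1 2 by auto
      define z where "z = (c1 / (c1 + c2)) *\<^sub>R x1 + (c2 / (c1 + c2)) *\<^sub>R x2"
      have "c1 / (c1 + c2) + c2 / (c1 + c2) = 1" using s by (simp add: add_divide_distrib[symmetric])
      then have "z \<in> P" unfolding z_def
        using convexD[OF assms(1) 1(2) 2(2), of "c1 / (c1 + c2)" "c2 / (c1 + c2)"] 1 2 s
        by simp
      moreover have "x + y = (c1 + c2) *\<^sub>R (z - v)"
      proof -
        have "(c1 + c2) *\<^sub>R z = c1 *\<^sub>R x1 + c2 *\<^sub>R x2" unfolding z_def using s
          by (simp add: scaleR_add_right)
        then show ?thesis unfolding 1 2 by (simp add: scaleR_diff_right scaleR_diff_right scaleR_add_left)
      qed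
      ultimately show ?thesis using s by (metis corner_coneI less_imp_le)
    qed
  qed
  show "convex (corner_cone P v)"
  proof (rule convexI)
    fix x y and u w :: real assume "x \<in> corner_cone P v" "y \<in> corner_cone P v" "0 \<le> u" "0 \<le> w" "u + w = 1"
    then show "u *\<^sub>R x + w *\<^sub>R y \<in> corner_cone P v" using add sc by simp
  qed
qed



context cfg begin

lemma lam_D: "x \<in> D \<Longrightarrow> 0 \<le> lam \<bullet> x \<and> lam \<bullet> x \<le> 1 \<and> (lam \<bullet> x = 1 \<longrightarrow> x = m)"
proof -
  assume "x \<in> D"
  from D_repr[OF this] show ?thesis
  proof (elim exE disjE conjE)
    fix u f assume u: "0 \<le> u" "u \<le> 1" "f \<in> F" "x = (1 - u) *\<^sub>R m + u *\<^sub>R f"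
    have "lam \<bullet> f = 0" using F_sub u by auto
    then have "lam \<bullet> x = 1 - u" using u lm by (simp add: inner_add_right)
    then show ?thesis using u by auto
  qed (use lm in auto)
qed

lemma m_ext_D: "m extreme_point_of D"
  unfolding extreme_point_of_def
proof (intro conjI ballI m_D notI)
  fix a b assume ab: "a \<in> D" "b \<in> D" "m \<in> open_segment a b"
  then obtain u where u: "a \<noteq> b" "0 < u" "u < 1" "m = (1 - u) *\<^sub>R a + u *\<^sub>R b"
    unfolding in_segment by blast
  have la: "lam \<bullet> a \<le> 1" "lam \<bullet> b \<le> 1" using lam_D ab by auto
  have "1 = (1 - u) * (lam \<bullet> a) + u * (lam \<bullet> b)" using u(4) lm by (metis inner_add_right inner_scaleR_right)
  then have e: "(1 - u) * (1 - lam \<bullet> a) + u * (1 - lam \<bullet> b) = 0" by (simp add: algebra_simps)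
  have p1: "(1 - u) * (1 - lam \<bullet> a) \<ge> 0" "u * (1 - lam \<bullet> b) \<ge> 0" using la u by auto
  then have "(1 - u) * (1 - lam \<bullet> a) = 0" "u * (1 - lam \<bullet> b) = 0" using e by linarith+
  then have "lam \<bullet> a = 1 \<and> lam \<bullet> b = 1" using u by auto
  then have "a = m" "b = m" using lam_D[OF ab(1)] lam_D[OF ab(2)] by auto
  then show False using u(1) by simp
qed

lemma m_PhiS: "m \<in> PhiS H M"
  unfolding PhiS_def H_def rcone_def using hm mM by (auto intro: hull_inc)

lemma m_ext_PhiS: "m extreme_point_of PhiS H M"
  using m_ext_D m_PhiS PhiS_D unfolding extreme_point_of_def by blast

lemma convex_PhiS: "convex (PhiS H M)"
  unfolding PhiS_def rcone_def using H_convex by (simp add: convex_Int convex_convex_cone_hull)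

lemma corner_eq: "corner_cone D m = corner_cone (PhiS H M) m"
proof
  show "corner_cone (PhiS H M) m \<subseteq> corner_cone D m"
    using PhiS_D by (auto elim!: corner_coneE intro!: corner_coneI)
  let ?C = "corner_cone (PhiS H M) m"
  have Cc: "convex ?C" and Cs: "\<And>x c. x \<in> ?C \<Longrightarrow> c \<ge> 0 \<Longrightarrow> c *\<^sub>R x \<in> ?C" and C0: "0 \<in> ?C"
    using corner_cone_convex[OF convex_PhiS m_PhiS] by auto
  have "D \<subseteq> {x. x - m \<in> ?C}"
    unfolding D_def
  proof (rule hull_minimal)
    show "convex {x. x - m \<in> ?C}"
    proof -
      have "{x. x - m \<in> ?C} = (\<lambda>x. m + x) ` ?C" by (auto simp: image_iff) (metis add.commute diff_add_cancel)
      then show ?thesis using Cc by (simp add: convex_translation)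
    qed
    show "insert m V \<subseteq> {x. x - m \<in> ?C}"
    proof safe
      show "m - m \<in> ?C" using C0 by simp
      fix w assume "w \<in> V"
      then obtain g where g: "g \<in> Gp" "w = wv g" unfolding V_def by auto
      have hg: "h \<bullet> g > 0" using Gp_h g by simp
      have mu: "mu \<bullet> g > 0" using g unfolding Gp_def by auto
      define y where "y = (1 / (h \<bullet> g)) *\<^sub>R g"
      have "g \<in> rcone M" using g GM unfolding Gp_def rcone_def by (auto intro: hull_inc)
      then have "y \<in> rcone M" unfolding y_def rcone_def using hg by (auto intro: convex_cone_hull_mul)
      moreover have "h \<bullet> y = 1" unfolding y_def using hg by simp
      ultimately have yP: "y \<in> PhiS H M" unfolding PhiS_def H_def by auto
      have hge: "h \<bullet> g = lam \<bullet> g + mu \<bullet> g" unfolding h_def by (simp add: inner_add_left)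
      have "w - m = ((h \<bullet> g) / (mu \<bullet> g)) *\<^sub>R (y - m)"
      proof -
        have "(mu \<bullet> g) *\<^sub>R (w - m) = g - (h \<bullet> g) *\<^sub>R m"
          unfolding g wv_def using mu hge by (simp add: algebra_simps)
        also have "\<dots> = (h \<bullet> g) *\<^sub>R (y - m)" unfolding y_def using hg by (simp add: algebra_simps)
        finally have "(mu \<bullet> g) *\<^sub>R (w - m) = (h \<bullet> g) *\<^sub>R (y - m)" .
        then have "(1 / (mu \<bullet> g)) *\<^sub>R ((mu \<bullet> g) *\<^sub>R (w - m)) = (1 / (mu \<bullet> g)) *\<^sub>R ((h \<bullet> g) *\<^sub>R (y - m))" by simp
        then show ?thesis using mu by simp
      qed
      then show "w - m \<in> ?C" using yP hg mu by (auto intro!: corner_coneI)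
    qed
  qed
  then show "corner_cone D m \<subseteq> ?C"
    using Cs by (auto elim!: corner_coneE)
qed

lemma affdim_eq: "aff_dim D = aff_dim (PhiS H M)"
  using corner_cone_aff_dim[OF m_D] corner_cone_aff_dim[OF m_PhiS] corner_eq by simp

lemma tangent: "tangent_at D (PhiS H M) m"
  unfolding tangent_at_def using PhiS_D m_ext_PhiS m_ext_D affdim_eq corner_eq by simp

end



context cfg begin

lemma m_lat: "m \<in> lattice_pts" using mM Mlat by auto

lemma G_lat: "g \<in> G \<Longrightarrow> g \<in> lattice_pts" using GM Mlat by auto

lemma h_lat: "h \<in> lattice_pts" unfolding h_def using lamZ muZ by (rule lat_add)

lemma H_eq: "H = {x. h \<bullet> x = 1}" unfolding H_def ..

lemma MP_eq: "MP H D = {of_nat k *\<^sub>R m + y | k y. y \<in> MP H F}"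
proof
  show "{of_nat k *\<^sub>R m + y | k y. y \<in> MP H F} \<subseteq> MP H D"
  proof safe
    fix k :: nat and y assume y: "y \<in> MP H F"
    have km: "of_nat k *\<^sub>R m \<in> lattice_pts" using m_lat by (rule lat_scale) simp
    show "of_nat k *\<^sub>R m + y \<in> MP H D"
    proof (cases "y = 0")
      case True
      show ?thesis
      proof (cases "k = 0")
        case True then show ?thesis using \<open>y = 0\<close> unfolding MP_def by simp
      next
        case False
        then have hk: "h \<bullet> (of_nat k *\<^sub>R m) > 0" using hm by simp
        have "(1 / (h \<bullet> (of_nat k *\<^sub>R m))) *\<^sub>R (of_nat k *\<^sub>R m) = m" using hm False by simp
        then show ?thesis unfolding H_eq MP_H using \<open>y = 0\<close> km hk m_D by auto
      qed
    next
      case False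
      then have yl: "y \<in> lattice_pts" and hy: "h \<bullet> y > 0" and yF: "(1 / (h \<bullet> y)) *\<^sub>R y \<in> F"
        using y unfolding H_eq MP_H by auto
      define z where "z = of_nat k *\<^sub>R m + y"
      have hz: "h \<bullet> z = of_nat k + h \<bullet> y" unfolding z_def using hm by (simp add: inner_add_right)
      then have hzp: "h \<bullet> z > 0" using hy by simp
      have "(1 / (h \<bullet> z)) *\<^sub>R z = (of_nat k / (h \<bullet> z)) *\<^sub>R m + ((h \<bullet> y) / (h \<bullet> z)) *\<^sub>R ((1 / (h \<bullet> y)) *\<^sub>R y)"
        unfolding z_def using hy by (simp add: scaleR_add_right)
      moreover have "(of_nat k / (h \<bullet> z)) *\<^sub>R m + ((h \<bullet> y) / (h \<bullet> z)) *\<^sub>R ((1 / (h \<bullet> y)) *\<^sub>R y) \<in> D"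
        apply (rule convexD[OF convex_D m_D])
        using yF F_D hzp hy hz by (auto simp: add_divide_distrib[symmetric])
      ultimately have "(1 / (h \<bullet> z)) *\<^sub>R z \<in> D" by simp
      moreover have "z \<in> lattice_pts" unfolding z_def using km yl by (rule lat_add)
      moreover have "z \<noteq> 0" using hzp by auto
      ultimately show ?thesis unfolding H_eq MP_H z_def[symmetric] using hzp by auto
    qed
  qed
next
  show "MP H D \<subseteq> {of_nat k *\<^sub>R m + y | k y. y \<in> MP H F}"
  proof
    fix z assume z: "z \<in> MP H D"
    show "z \<in> {of_nat k *\<^sub>R m + y | k y. y \<in> MP H F}"
    proof (cases "z = 0")
      case True
      have "0 \<in> MP H F" unfolding MP_def by simp
      then show ?thesis using True by (auto intro!: exI[of _ 0])
    next
      case False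
      then have zl: "z \<in> lattice_pts" and hz: "h \<bullet> z > 0" and xD: "(1 / (h \<bullet> z)) *\<^sub>R z \<in> D"
        using z unfolding H_eq MP_H by auto
      define x where "x = (1 / (h \<bullet> z)) *\<^sub>R z"
      have zx: "z = (h \<bullet> z) *\<^sub>R x" unfolding x_def using hz by simp
      have lz: "lam \<bullet> z \<in> \<int>" using lamZ zl by (rule lat_inner)
      have lzx: "lam \<bullet> z = (h \<bullet> z) * (lam \<bullet> x)" by (subst zx) simp
      then have lz0: "lam \<bullet> z \<ge> 0" using lam_D[OF xD[folded x_def]] hz by simp
      obtain i where i: "lam \<bullet> z = of_int i" using lz by (auto elim: Ints_cases)
      then have "i \<ge> 0" using lz0 by simp
      then have k: "of_nat (nat i) = lam \<bullet> z" using i by simp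
      define k where "k = nat i"
      note k = k[folded k_def]
      define y where "y = z - (lam \<bullet> z) *\<^sub>R m"
      have yl: "y \<in> lattice_pts" unfolding y_def using zl lat_scale[OF m_lat lz] by (rule lat_diff)
      have "y \<in> MP H F"
      proof (cases "y = 0")
        case True then show ?thesis unfolding MP_def by simp
      next
        case False
        from D_repr[OF xD[folded x_def]] show ?thesis
        proof (elim exE disjE conjE)
          assume "x = m"
          then have zm: "z = (h \<bullet> z) *\<^sub>R m" using zx by simp
          have "lam \<bullet> z = h \<bullet> z" by (subst zm) (simp add: lm)
          then have "y = 0" unfolding y_def using zm by simp
          then show ?thesis using False by simp
        next
          fix u f assume u: "0 \<le> u" "u \<le> 1" "f \<in> F" "x = (1 - u) *\<^sub>R m + u *\<^sub>R f"
          have lf: "lam \<bullet> f = 0" and hf: "h \<bullet> f = 1" using F_sub u(3) by (auto simp: H_def)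
          have "lam \<bullet> x = 1 - u" using u(4) lf lm by (simp add: inner_add_right)
          then have lzu: "lam \<bullet> z = (h \<bullet> z) * (1 - u)" using lzx by simp
          obtain t where t: "t = h \<bullet> z" by simp
          have zt: "z = t *\<^sub>R ((1 - u) *\<^sub>R m + u *\<^sub>R f)" using zx u(4) t by simp
          have yeq: "y = ((h \<bullet> z) * u) *\<^sub>R f" unfolding y_def lzu t[symmetric]
            by (subst zt) (simp add: algebra_simps)
          then have "u \<noteq> 0" using False by auto
          then have hy: "h \<bullet> y = (h \<bullet> z) * u" "(h \<bullet> z) * u > 0" using yeq hf hz u by auto
          have "(1 / (h \<bullet> y)) *\<^sub>R y = f" using hy(2) hf unfolding hy(1) yeq by (auto simp: mult_pos_pos)
          then show ?thesis unfolding H_eq MP_H using yl hy False u(3) by auto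
        qed
      qed
      moreover have "z = of_nat k *\<^sub>R m + y" unfolding y_def k by simp
      ultimately show ?thesis by blast
    qed
  qed
qed

lemma F_PhiS: "F \<inter> PhiS H M = {}"
proof (rule ccontr)
  assume "F \<inter> PhiS H M \<noteq> {}"
  then obtain x where x: "x \<in> F" "x \<in> rcone M" "h \<bullet> x = 1" unfolding PhiS_def H_def by auto
  then have "lam \<bullet> x = 0" using F_sub by auto
  then have "x = 0" using Cg_props(3) rcone_Cg x(2) by auto
  then show False using x by simp
qed

lemma good: "good_hyperplane M H"
  unfolding good_hyperplane_def
proof (intro conjI)
  show "rat_hyperplane H" unfolding rat_hyperplane_def H_eq
    by (rule exI[of _ h], rule exI[of _ 1]) (use h_lat lat_rat hm in auto)
  show "0 \<notin> H" unfolding H_def by simp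
  show "rcone M = rcone (rcone M \<inter> H)"
  proof
    show "rcone (rcone M \<inter> H) \<subseteq> rcone M" unfolding rcone_def
      by (metis hull_hull hull_mono inf_le1)
    show "rcone M \<subseteq> rcone (rcone M \<inter> H)"
    proof
      fix x assume x: "x \<in> rcone M"
      show "x \<in> rcone (rcone M \<inter> H)"
      proof (cases "x = 0")
        case True then show ?thesis unfolding rcone_def by (simp add: convex_cone_hull_contains_0)
      next
        case False
        then have hx: "h \<bullet> x > 0" using rcone_h_pos x by simp
        have "(1 / (h \<bullet> x)) *\<^sub>R x \<in> rcone M \<inter> H" using x hx unfolding H_def rcone_def
          by (auto intro: convex_cone_hull_mul)
        then have "(h \<bullet> x) *\<^sub>R ((1 / (h \<bullet> x)) *\<^sub>R x) \<in> rcone (rcone M \<inter> H)"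
          unfolding rcone_def using hx by (intro convex_cone_hull_mul hull_inc) auto
        then show ?thesis using hx by simp
      qed
    qed
  qed
qed

lemma V_rat: "x \<in> V \<Longrightarrow> rat_vec x"
proof -
  assume "x \<in> V"
  then obtain g where g: "g \<in> Gp" "x = wv g" unfolding V_def by auto
  have gl: "g \<in> lattice_pts" using g G_lat unfolding Gp_def by auto
  have a: "lam \<bullet> g \<in> \<rat>" "mu \<bullet> g \<in> \<rat>"
    using lat_inner[OF lamZ gl] lat_inner[OF muZ gl] Ints_subset_Rats by auto
  have "rat_vec g" "rat_vec m" using gl m_lat lat_rat by auto
  then show "rat_vec x" unfolding g wv_def rat_vec_def using a by auto
qed

lemma hullF: "convex hull (insert m F) = D"
  unfolding D_def F_def
proof
  show "convex hull insert m (convex hull V) \<subseteq> convex hull insert m V"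
    by (rule hull_minimal) (auto intro: hull_inc hull_mono[THEN subsetD, of V "insert m V"])
  show "convex hull insert m V \<subseteq> convex hull insert m (convex hull V)"
    by (rule hull_mono) (auto intro: hull_inc)
qed

lemma pyr: "rat_pyramid H m F D"
  unfolding rat_pyramid_def
proof (intro conjI)
  show "rat_vec m" using m_lat lat_rat by auto
  show "rational_polytope F" unfolding rational_polytope_def F_def using finV V_rat by blast
  have "affine hull F \<subseteq> {x. lam \<bullet> x = 0}"
    by (rule hull_minimal) (use F_sub affine_hyperplane in auto)
  then show "m \<notin> affine hull F" using lm by auto
  show "D = convex hull insert m F" using hullF by simp
  show "D \<subseteq> H" by (rule D_H)
qed

lemma PhiV_m: "PhiV H m = {m}" unfolding H_eq ray_H using hm by simp

lemma admissible: "admissible_config M m H D D"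
  unfolding admissible_config_def
  using good PhiV_m pyr PhiS_D tangent MP_eq F_PhiS by blast

end



lemma rat_inner: "rat_vec x \<Longrightarrow> rat_vec y \<Longrightarrow> x \<bullet> y \<in> \<rat>"
  unfolding rat_vec_def inner_vec_def by (auto intro!: Rats_sum Rats_mult)

lemma rat_denom:
  fixes x :: "real^'n"
  assumes "rat_vec x"
  shows "\<exists>d::nat. d > 0 \<and> of_nat d *\<^sub>R x \<in> lattice_pts"
proof -
  have "finite I \<Longrightarrow> \<exists>d::nat. d > 0 \<and> (\<forall>i\<in>I. of_nat d * x $ i \<in> \<int>)" for I :: "'n set"
  proof (induction I rule: finite_induct)
    case empty then show ?case by (intro exI[of _ 1]) auto
  next
    case (insert i I)
    then obtain d :: nat where d: "d > 0" "\<forall>j\<in>I. of_nat d * x $ j \<in> \<int>" by blast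
    from assms have "x $ i \<in> \<rat>" unfolding rat_vec_def by auto
    then obtain a b where ab: "b > 0" "x $ i = of_int a / of_int b" by (elim Rats_cases')
    define d' where "d' = d * nat b"
    have "d' > 0" unfolding d'_def using d ab by simp
    moreover have "\<forall>j\<in>insert i I. of_nat d' * x $ j \<in> \<int>"
    proof
      fix j assume "j \<in> insert i I"
      then show "of_nat d' * x $ j \<in> \<int>"
      proof
        assume "j = i"
        have "of_nat d' * x $ j = of_nat d * of_int a" unfolding d'_def \<open>j = i\<close> ab(2) using ab(1)
          by (simp add: of_nat_mult)
        then show ?thesis by simp
      next
        assume "j \<in> I"
        then have "of_nat d * x $ j \<in> \<int>" using d by auto
        then have "of_int b * (of_nat d * x $ j) \<in> \<int>" by (rule Ints_mult[OF Ints_of_int])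
        moreover have "of_nat d' * x $ j = of_int b * (of_nat d * x $ j)"
        proof -
          have "(of_nat d' :: real) = of_int b * of_nat d" unfolding d'_def using ab(1) by simp
          then show ?thesis by simp
        qed
        ultimately show ?thesis by metis
      qed
    qed
    ultimately show ?case by blast
  qed
  from this[of UNIV] obtain d :: nat where "d > 0" "\<forall>i. of_nat d * x $ i \<in> \<int>" by auto
  then show ?thesis unfolding lattice_pts_def by (intro exI[of _ d]) auto
qed

lemma rat_approx_vec:
  fixes a :: "real^'n"
  assumes "e > 0"
  shows "\<exists>a'. rat_vec a' \<and> norm (a - a') < e"
proof -
  define \<delta> where "\<delta> = e / real CARD('n)"
  have \<delta>: "\<delta> > 0" unfolding \<delta>_def using assms by simp
  have "\<forall>i. \<exists>r. r \<in> \<rat> \<and> \<bar>r - a $ i\<bar> < \<delta>" using rational_approximation[OF \<delta>] by metis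
  then obtain f where f: "\<And>i. f i \<in> \<rat>" "\<And>i. \<bar>f i - a $ i\<bar> < \<delta>" by metis
  define a' where "a' = (\<chi> i. f i)"
  have "norm (a - a') \<le> (\<Sum>i\<in>UNIV. \<bar>(a - a') $ i\<bar>)" by (rule norm_le_l1_cart)
  also have "\<dots> < (\<Sum>i\<in>(UNIV::'n set). \<delta>)"
    by (rule sum_strict_mono) (use f in \<open>auto simp: a'_def abs_minus_commute\<close>)
  also have "\<dots> = e" unfolding \<delta>_def by simp
  finally have n: "norm (a - a') < e" .
  show ?thesis using f n by (intro exI[of _ a']) (simp add: rat_vec_def a'_def)
qed

lemma sep_rat:
  fixes a :: "real^'n"
  assumes "finite W" "\<And>w. w \<in> W \<Longrightarrow> a \<bullet> w > 0"
  shows "\<exists>a'. rat_vec a' \<and> (\<forall>w\<in>W. a' \<bullet> w > 0)"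
proof -
  define Ob where "Ob = (\<Inter>w\<in>W. {x. inner w x > 0})"
  have "open Ob" unfolding Ob_def using assms(1) by (intro open_INT) (auto intro: open_halfspace_gt)
  moreover have "a \<in> Ob" unfolding Ob_def using assms(2) by (auto simp: inner_commute)
  ultimately obtain e where e: "e > 0" "ball a e \<subseteq> Ob" using open_contains_ball by blast
  obtain a' where a': "rat_vec a'" "norm (a - a') < e" using rat_approx_vec[OF e(1)] by blast
  then have "a' \<in> Ob" using e(2) by (auto simp: dist_norm)
  then show ?thesis using a' unfolding Ob_def by (auto simp: inner_commute)
qed

lemma axis_lat: "axis i 1 \<in> lattice_pts"
  unfolding lattice_pts_def axis_def by auto

lemma gcd_vec:
  fixes m :: "real^'n"
  assumes ml: "m \<in> lattice_pts" and mnz: "m \<noteq> 0"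
  shows "\<exists>d::nat. d > 0 \<and> (1 / of_nat d) *\<^sub>R m \<in> lattice_pts \<and> (\<exists>\<nu>\<in>lattice_pts. \<nu> \<bullet> m = of_nat d)"
proof -
  define P where "P n \<longleftrightarrow> n > 0 \<and> (\<exists>\<nu>\<in>lattice_pts. \<nu> \<bullet> m = of_nat n)" for n :: nat
  have mm: "m \<bullet> m \<in> \<int>" "m \<bullet> m > 0" using lat_inner[OF ml ml] mnz by auto
  then obtain z where z: "m \<bullet> m = of_int z" by (auto elim: Ints_cases)
  then have "z > 0" using mm by simp
  then have "P (nat z)" unfolding P_def using ml z by auto
  define d where "d = (LEAST n. P n)"
  have Pd: "P d" unfolding d_def by (rule LeastI) fact
  then obtain \<nu>0 where \<nu>0: "\<nu>0 \<in> lattice_pts" "\<nu>0 \<bullet> m = of_nat d" and dpos: "d > 0" unfolding P_def by blast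
  have "\<forall>i. (1 / of_nat d) * m $ i \<in> \<int>"
  proof
    fix i
    have "m $ i \<in> \<int>" using ml unfolding lattice_pts_def by auto
    then obtain zi where zi: "m $ i = of_int zi" by (auto elim: Ints_cases)
    define q where "q = zi div int d"
    define r where "r = zi mod int d"
    have zqr: "zi = q * int d + r" unfolding q_def r_def by simp
    have r0: "r \<ge> 0" "r < int d" unfolding r_def using dpos by auto
    define \<nu> where "\<nu> = axis i 1 - of_int q *\<^sub>R \<nu>0"
    have \<nu>l: "\<nu> \<in> lattice_pts" unfolding \<nu>_def using axis_lat \<nu>0(1) by (intro lat_diff lat_scale) auto
    have ax: "axis i 1 \<bullet> m = m $ i" by (simp add: cart_eq_inner_axis inner_commute)
    have "\<nu> \<bullet> m = m $ i - of_int q * of_nat d" unfolding \<nu>_def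
      by (simp only: inner_diff_left inner_scaleR_left ax \<nu>0(2))
    also have "\<dots> = of_int r" unfolding zi using zqr by (simp add: algebra_simps)
    finally have \<nu>m: "\<nu> \<bullet> m = of_int r" .
    have "r = 0"
    proof (rule ccontr)
      assume "r \<noteq> 0"
      then have "P (nat r)" unfolding P_def using r0 \<nu>l \<nu>m by auto
      moreover have "nat r < d" using r0 by auto
      ultimately show False using not_less_Least[of "nat r" P] unfolding d_def by blast
    qed
    then have "m $ i = of_int q * of_nat d" using zi zqr by simp
    then show "(1 / of_nat d) * m $ i \<in> \<int>" using dpos by simp
  qed
  then have "(1 / of_nat d) *\<^sub>R m \<in> lattice_pts" unfolding lattice_pts_def by simp
  then show ?thesis using dpos \<nu>0 by blast
qed




theorem lemma3p4:
  fixes M :: "(real^'n) set" and m :: "real^'n"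
  assumes "affine_monoid M"
    and "gp M = lattice_pts"
    and "positive_monoid M"
    and "normal_monoid M"
    and "CARD('n) \<ge> 2"
    and "\<exists>H0. good_hyperplane M H0 \<and> extremal_generator M H0 m"
  shows "\<exists>H D1 D2. admissible_config M m H D1 D2"
proof -
  from assms(1) obtain G where finG: "finite G" and GM: "G \<subseteq> M" and Mlat: "M \<subseteq> lattice_pts"
    and Mdef: "M = {(\<Sum>g\<in>G. of_nat (k g) *\<^sub>R g) | k :: real^'n \<Rightarrow> nat. True}"
    unfolding affine_monoid_def by blast
  have Mrep: "\<exists>c. (\<forall>g\<in>G. c g \<ge> 0) \<and> x = (\<Sum>g\<in>G. c g *\<^sub>R g)" if "x \<in> M" for x
  proof -
    from that obtain k :: "real^'n \<Rightarrow> nat" where "x = (\<Sum>g\<in>G. of_nat (k g) *\<^sub>R g)"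
      by (subst (asm) Mdef) blast
    then show ?thesis by (intro exI[of _ "\<lambda>g. of_nat (k g)"]) auto
  qed
  from assms(6) obtain H0 where good0: "good_hyperplane M H0" and ext0: "extremal_generator M H0 m" by blast
  from ext0 obtain v where mM: "m \<in> M" and Pv: "PhiV H0 m = {v}" and vext: "v extreme_point_of PhiS H0 M"
    and rayM: "ray m \<inter> M = range (\<lambda>k::nat. of_nat k *\<^sub>R m)"
    unfolding extremal_generator_def by blast
  from good0 obtain a c where a: "rat_vec a" "a \<noteq> 0" "c \<in> \<rat>" and H0: "H0 = {x. a \<bullet> x = c}"
    and z0: "0 \<notin> H0" and rc0: "rcone M = rcone (rcone M \<inter> H0)"
    unfolding good_hyperplane_def rat_hyperplane_def by blast
  have c0: "c \<noteq> 0" using z0 H0 by auto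
  define h0 where "h0 = (1 / c) *\<^sub>R a"
  have H0h: "H0 = {x. h0 \<bullet> x = 1}" unfolding H0 h0_def using c0 by (auto simp: field_simps)
  have h0rat: "rat_vec h0" using a unfolding h0_def rat_vec_def by auto
  have h0pos: "h0 \<bullet> x > 0" if "x \<in> rcone M" "x \<noteq> 0" for x
  proof -
    define S0 where "S0 = {x. h0 \<bullet> x > 0} \<union> {0}"
    have "convex_cone S0" unfolding convex_cone_iff S0_def
      by (auto simp: inner_add_right)
    moreover have "rcone M \<inter> H0 \<subseteq> S0" unfolding S0_def H0h by auto
    ultimately have "rcone (rcone M \<inter> H0) \<subseteq> S0" unfolding rcone_def by (rule hull_minimal[rotated])
    then show ?thesis using that rc0 unfolding S0_def by auto
  qed
  have mlat: "m \<in> lattice_pts" using mM Mlat by auto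
  have mrc: "m \<in> rcone M" using mM unfolding rcone_def by (rule hull_inc)
  have mnz: "m \<noteq> 0"
  proof
    assume "m = 0"
    then have "PhiV H0 m = {}" unfolding H0h ray_H by simp
    then show False using Pv by simp
  qed
  have h0m: "h0 \<bullet> m > 0" using h0pos mrc mnz by simp
  have vdef: "v = (1 / (h0 \<bullet> m)) *\<^sub>R m" using Pv h0m unfolding H0h ray_H by simp
  have Grc: "g \<in> rcone M" if "g \<in> G" for g using that GM unfolding rcone_def by (auto intro: hull_inc)
  have zray: "0 \<in> ray m" unfolding ray_def by (auto intro: exI[of _ 0])
  define Gn where "Gn = {g\<in>G. g \<notin> ray m}"
  have Gnh: "h0 \<bullet> g > 0" if "g \<in> Gn" for g using that h0pos Grc zray unfolding Gn_def by auto
  define Ss where "Ss = (\<lambda>g. (1 / (h0 \<bullet> g)) *\<^sub>R g) ` Gn"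
  have finSs: "finite Ss" unfolding Ss_def Gn_def using finG by auto
  have SsP: "Ss \<subseteq> PhiS H0 M"
  proof
    fix s assume "s \<in> Ss"
    then obtain g where g: "g \<in> Gn" "s = (1 / (h0 \<bullet> g)) *\<^sub>R g" unfolding Ss_def by auto
    have "s \<in> rcone M" unfolding g(2) rcone_def using Grc[of g] g(1) Gnh[OF g(1)] unfolding Gn_def rcone_def
      by (auto intro: convex_cone_hull_mul)
    moreover have "h0 \<bullet> s = 1" using g Gnh[OF g(1)] by simp
    ultimately show "s \<in> PhiS H0 M" unfolding PhiS_def H0h by auto
  qed
  have convP: "convex (PhiS H0 M)" unfolding PhiS_def H0h rcone_def
    by (intro convex_Int convex_convex_cone_hull convex_hyperplane)
  have vnot: "v \<notin> convex hull Ss"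
  proof
    assume vin: "v \<in> convex hull Ss"
    have "convex hull Ss \<subseteq> PhiS H0 M" using SsP convP by (rule hull_minimal)
    then have "v extreme_point_of convex hull Ss" using vext vin unfolding extreme_point_of_def by blast
    then have "v \<in> Ss" by (rule extreme_point_of_convex_hull)
    then obtain g where g: "g \<in> Gn" "v = (1 / (h0 \<bullet> g)) *\<^sub>R g" unfolding Ss_def by auto
    have hg: "h0 \<bullet> g > 0" using Gnh g by simp
    have "g = (h0 \<bullet> g) *\<^sub>R v" using g(2) hg by simp
    also have "\<dots> = ((h0 \<bullet> g) / (h0 \<bullet> m)) *\<^sub>R m" unfolding vdef by simp
    finally have "g \<in> ray m" unfolding ray_def using hg h0m by (auto intro!: exI[of _ "(h0 \<bullet> g) / (h0 \<bullet> m)"])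
    then show False using g unfolding Gn_def by auto
  qed
  have "convex (convex hull Ss)" "closed (convex hull Ss)"
    using finSs by (auto intro: compact_imp_closed finite_imp_compact_convex_hull)
  from separating_hyperplane_closed_point[OF this vnot]
  obtain a1 b where ab: "a1 \<bullet> v < b" "\<forall>x\<in>convex hull Ss. b < a1 \<bullet> x" by blast
  have "\<exists>a'. rat_vec a' \<and> (\<forall>w\<in>(\<lambda>s. s - v) ` Ss. a' \<bullet> w > 0)"
  proof (rule sep_rat)
    show "finite ((\<lambda>s. s - v) ` Ss)" using finSs by simp
    fix w assume "w \<in> (\<lambda>s. s - v) ` Ss"
    then obtain s where s: "s \<in> Ss" "w = s - v" by auto
    have "b < a1 \<bullet> s" using ab(2) s(1) by (simp add: hull_inc)
    then show "a1 \<bullet> w > 0" using s ab(1) by (simp add: inner_diff_right)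
  qed
  then obtain a' where a'r: "rat_vec a'" and a'p: "\<And>s. s \<in> Ss \<Longrightarrow> a' \<bullet> (s - v) > 0" by blast
  have vrat: "rat_vec v" unfolding vdef using lat_rat[OF mlat] rat_inner[OF h0rat lat_rat[OF mlat]]
    unfolding rat_vec_def by auto
  define mu0 where "mu0 = a' - (a' \<bullet> v) *\<^sub>R h0"
  have mu0r: "rat_vec mu0" unfolding mu0_def using a'r h0rat rat_inner[OF a'r vrat]
    unfolding rat_vec_def by auto
  have mu0m: "mu0 \<bullet> m = 0"
  proof -
    have "a' \<bullet> v = (a' \<bullet> m) / (h0 \<bullet> m)" unfolding vdef by simp
    then show ?thesis unfolding mu0_def using h0m by (simp add: inner_diff_left)
  qed
  have mu0g: "mu0 \<bullet> g > 0" if "g \<in> Gn" for g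
  proof -
    have hg: "h0 \<bullet> g > 0" using Gnh that by simp
    define s where "s = (1 / (h0 \<bullet> g)) *\<^sub>R g"
    have "s \<in> Ss" unfolding Ss_def s_def using that by auto
    then have p: "a' \<bullet> s - a' \<bullet> v > 0" using a'p[of s] by (simp add: inner_diff_right)
    have hs: "h0 \<bullet> s = 1" unfolding s_def using hg by simp
    have "mu0 \<bullet> s = a' \<bullet> s - a' \<bullet> v" unfolding mu0_def using hs by (simp add: inner_diff_left)
    moreover have "g = (h0 \<bullet> g) *\<^sub>R s" unfolding s_def using hg by simp
    ultimately have "mu0 \<bullet> g = (h0 \<bullet> g) * (a' \<bullet> s - a' \<bullet> v)" by (metis inner_scaleR_right)
    then show ?thesis using hg p by simp
  qed
  obtain dd :: nat where dd: "dd > 0" "of_nat dd *\<^sub>R mu0 \<in> lattice_pts" using rat_denom[OF mu0r] by blast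
  define mu where "mu = of_nat dd *\<^sub>R mu0"
  have muZ: "mu \<in> lattice_pts" using dd unfolding mu_def by simp
  have mum: "mu \<bullet> m = 0" unfolding mu_def using mu0m by simp
  have mug: "mu \<bullet> g > 0" if "g \<in> Gn" for g unfolding mu_def using mu0g[OF that] dd by simp
  obtain d :: nat where d: "d > 0" "(1 / of_nat d) *\<^sub>R m \<in> lattice_pts" and nu: "\<exists>\<nu>\<in>lattice_pts. \<nu> \<bullet> m = of_nat d"
    using gcd_vec[OF mlat mnz] by blast
  have d1: "d = 1"
  proof -
    define w where "w = (1 / of_nat d) *\<^sub>R m"
    have "w \<in> gp M" using d(2) assms(2) unfolding w_def by simp
    moreover have "of_nat d *\<^sub>R w \<in> M" unfolding w_def using d mM by simp
    ultimately have "w \<in> M" using assms(4) d(1) unfolding normal_monoid_def by (metis One_nat_def Suc_leI)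
    moreover have "w \<in> ray m" unfolding ray_def w_def by (auto intro!: exI[of _ "1 / of_nat d"])
    ultimately obtain k :: nat where "w = of_nat k *\<^sub>R m" using rayM by blast
    then have "(1 / of_nat d - of_nat k) *\<^sub>R m = 0" unfolding w_def by (simp add: scaleR_diff_left)
    then have "1 / of_nat d = (of_nat k :: real)" using mnz by simp
    then have "of_nat k * of_nat d = (1::real)" using d(1) by (simp add: field_simps)
    then have "k * d = 1" by (metis of_nat_1 of_nat_eq_iff of_nat_mult)
    then show ?thesis by simp
  qed
  obtain \<nu>0 where \<nu>0: "\<nu>0 \<in> lattice_pts" "\<nu>0 \<bullet> m = 1" using nu d1 by auto
  define N where "N = nat \<lceil>\<Sum>g\<in>G. \<bar>\<nu>0 \<bullet> g\<bar>\<rceil> + 1"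
  have Nbig: "\<bar>\<nu>0 \<bullet> g\<bar> < of_nat N" if "g \<in> G" for g
  proof -
    have "\<bar>\<nu>0 \<bullet> g\<bar> \<le> (\<Sum>g\<in>G. \<bar>\<nu>0 \<bullet> g\<bar>)" using finG that by (intro member_le_sum) auto
    also have "\<dots> \<le> of_int \<lceil>\<Sum>g\<in>G. \<bar>\<nu>0 \<bullet> g\<bar>\<rceil>" by linarith
    also have "\<dots> < of_nat N" unfolding N_def by linarith
    finally show ?thesis .
  qed
  define lam where "lam = \<nu>0 + of_nat N *\<^sub>R mu"
  have lamZ: "lam \<in> lattice_pts" unfolding lam_def using \<nu>0(1) muZ by (intro lat_add lat_scale) auto
  have lm: "lam \<bullet> m = 1" unfolding lam_def using \<nu>0 mum by (simp add: inner_add_left)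
  have Gcase: "(g \<in> ray m \<and> lam \<bullet> g \<ge> 0 \<and> g = (lam \<bullet> g) *\<^sub>R m \<and> (g \<noteq> 0 \<longrightarrow> lam \<bullet> g > 0)) \<or>
                (mu \<bullet> g > 0 \<and> lam \<bullet> g > 0)" if gG: "g \<in> G" for g
  proof (cases "g \<in> ray m")
    case True
    then obtain t where t: "t \<ge> 0" "g = t *\<^sub>R m" unfolding ray_def by auto
    have "lam \<bullet> g = t" unfolding t(2) using lm by simp
    then show ?thesis using True t by auto
  next
    case False
    then have gn: "g \<in> Gn" unfolding Gn_def using gG by auto
    have mg: "mu \<bullet> g > 0" using mug[OF gn] .
    have "mu \<bullet> g \<in> \<int>" using lat_inner[OF muZ] gG GM Mlat by auto
    then obtain zz where zz: "mu \<bullet> g = of_int zz" by (auto elim: Ints_cases)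
    then have "zz > 0" using mg by simp
    then have mg1: "mu \<bullet> g \<ge> 1" using zz by simp
    have "of_nat N * 1 \<le> of_nat N * (mu \<bullet> g)" using mg1 by (intro mult_left_mono) auto
    then have "lam \<bullet> g > 0" unfolding lam_def using Nbig[OF gG] by (simp add: inner_add_left)
    then show ?thesis using mg by auto
  qed
  interpret cfg M G m lam mu
  proof
    show "finite G" "G \<subseteq> M" "M \<subseteq> lattice_pts" "m \<in> M" by fact+
    show "\<And>x. x \<in> M \<Longrightarrow> \<exists>c. (\<forall>g\<in>G. c g \<ge> 0) \<and> x = (\<Sum>g\<in>G. c g *\<^sub>R g)" by (rule Mrep)
    show "lam \<in> lattice_pts" "mu \<in> lattice_pts" "lam \<bullet> m = 1" "mu \<bullet> m = 0" by fact+
    show "\<And>g. g \<in> G \<Longrightarrow> g \<noteq> 0 \<Longrightarrow> lam \<bullet> g > 0" using Gcase by meson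
    show "\<And>g. g \<in> G \<Longrightarrow> mu \<bullet> g > 0 \<or> g = (lam \<bullet> g) *\<^sub>R m" using Gcase by meson
  qed
  show ?thesis using admissible by (intro exI)
qed


end
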